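(* Let $\bm{N}=(N_0,\ldots,N_{n-1},-\sum_iN_i)$ with each $N_i\in\mathbb{Z}_{\ge0}$. A weak composition $\bm{j}=(j_0,\ldots,j_{n-1})$ of $\binom n2$ belongs to $\mathcal{S}^+_n(\bm{N})$ if and only if $j_i\le N_i+n-i-1$ for $i=0,\ldots,n-1$ and $\sum_{i=0}^k j_i\ge\sum_{i=0}^k(n-1-i)$ for all $k=0,\ldots,n-1$.
   Context: For $\bm{M}=(M_0,\ldots,M_n)\in\mathbb{Z}^{n+1}$ with $\sum_iM_i=0$, $K_n(\bm{M})$ is the number of integer vectors $(f_{ij})_{0\le i<j\le n}\in\mathbb{Z}_{\ge0}^{\binom{n+1}{2}}$ with $\sum_{j>i} f_{ij}-\sum_{k<i} f_{ki}=M_i$ for all $i$. Let $\bm\delta=(n-1,n-2,\ldots,1,0)$. For a weak composition $\bm{j}$ of $\binom n2$ (nonnegative integers summing to $\binom n2$), $K_n(\bm{j}-\bm\delta)$ means $K_n(j_0-(n-1),j_1-(n-2),\ldots,j_{n-1}-0,0)$. $\mathcal{S}^+_n(\bm{N})$ is the set of weak compositions $\bm{j}$ of $\binom n2$ such that $\binom{N_0+n-1}{j_0}\binom{N_1+n-2}{j_1}\cdots\binom{N_{n-1}}{j_{n-1}}\cdot K_n(\bm{j}-\bm\delta)>0$. *)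

theory Defs
  imports Main
begin

(* Vectors M = (M_0,...,M_n) are functions nat => int, only indices 0..n matter.
   A flow f = (f_ij)_{0<=i<j<=n} is a function nat => nat => nat which vanishes
   outside {(i,j). i < j <= n}. *)
definition flows :: "nat \<Rightarrow> (nat \<Rightarrow> int) \<Rightarrow> (nat \<Rightarrow> nat \<Rightarrow> nat) set" where
  "flows n M = {f. (\<forall>i j. \<not> (i < j \<and> j \<le> n) \<longrightarrow> f i j = 0) \<and>
      (\<forall>i\<le>n. (\<Sum>j\<in>{i<..n}. int (f i j)) - (\<Sum>k<i. int (f k i)) = M i)}"

definition kostant :: "nat \<Rightarrow> (nat \<Rightarrow> int) \<Rightarrow> nat" where
  "kostant n M = card (flows n M)"

definition weak_comps :: "nat \<Rightarrow> (nat \<Rightarrow> nat) set" where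
  "weak_comps n = {j. (\<forall>i\<ge>n. j i = 0) \<and> (\<Sum>i<n. j i) = n choose 2}"

definition j_minus_delta :: "nat \<Rightarrow> (nat \<Rightarrow> nat) \<Rightarrow> nat \<Rightarrow> int" where
  "j_minus_delta n j = (\<lambda>i. if i < n then int (j i) - int (n - 1 - i) else 0)"

(* S^+_n(N) for N = (N_0,...,N_{n-1}, -sum N_i) with N_i >= 0 (N given by its first n entries) *)
definition Splus :: "nat \<Rightarrow> (nat \<Rightarrow> nat) \<Rightarrow> (nat \<Rightarrow> nat) set" where
  "Splus n N = {j \<in> weak_comps n.
      (\<Prod>i<n. (N i + n - 1 - i) choose (j i)) * kostant n (j_minus_delta n j) > 0}"

end

theory Submission
  imports Defs
begin

lemma flow_cut:
  assumes f: "f \<in> flows n M" and k: "k \<le> n"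
  shows "(\<Sum>i\<le>k. M i) = (\<Sum>i\<le>k. \<Sum>l\<in>{k<..n}. int (f i l))"
  using k
proof (induction k)
  case 0
  have "M 0 = (\<Sum>l\<in>{0<..n}. int (f 0 l))" using f unfolding flows_def by auto
  then show ?case by simp
next
  case (Suc k)
  have z: "\<forall>i j. \<not> (i < j \<and> j \<le> n) \<longrightarrow> f i j = 0"
    and e: "M (Suc k) = (\<Sum>l\<in>{Suc k<..n}. int (f (Suc k) l)) - (\<Sum>i<Suc k. int (f i (Suc k)))"
    using f Suc.prems unfolding flows_def by auto
  have split: "(\<Sum>l\<in>{k<..n}. int (f i l)) = int (f i (Suc k)) + (\<Sum>l\<in>{Suc k<..n}. int (f i l))" for i
  proof -
    have "{k<..n} = insert (Suc k) {Suc k<..n}" using Suc.prems by auto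
    then show ?thesis by simp
  qed
  have "(\<Sum>i\<le>Suc k. M i) = (\<Sum>i\<le>k. M i) + M (Suc k)" by simp
  also have "\<dots> = (\<Sum>i\<le>k. int (f i (Suc k)) + (\<Sum>l\<in>{Suc k<..n}. int (f i l))) + M (Suc k)"
    using Suc by (simp add: split)
  also have "\<dots> = (\<Sum>i\<le>k. int (f i (Suc k))) + (\<Sum>i\<le>k. (\<Sum>l\<in>{Suc k<..n}. int (f i l)))
       + (\<Sum>l\<in>{Suc k<..n}. int (f (Suc k) l)) - (\<Sum>i<Suc k. int (f i (Suc k)))"
    by (simp add: sum.distrib e)
  also have "\<dots> = (\<Sum>i\<le>Suc k. \<Sum>l\<in>{Suc k<..n}. int (f i l))"
    using lessThan_Suc_atMost by simp
  finally show ?case .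
qed

lemma flows_finite: "finite (flows n M)"
proof -
  define B where "B = (\<Sum>i\<le>n. nat (\<Sum>i'\<le>i. M i'))"
  have bnd: "f i l \<le> B" if f: "f \<in> flows n M" for f i l
  proof (cases "i < l \<and> l \<le> n")
    case True
    have "int (f i l) \<le> (\<Sum>l'\<in>{i<..n}. int (f i l'))"
      by (rule member_le_sum) (use True in auto)
    also have "\<dots> \<le> (\<Sum>i'\<le>i. \<Sum>l'\<in>{i<..n}. int (f i' l'))"
      by (rule member_le_sum[where f="\<lambda>i'. \<Sum>l'\<in>{i<..n}. int (f i' l')"]) (auto intro: sum_nonneg)
    also have "\<dots> = (\<Sum>i'\<le>i. M i')" using flow_cut[OF f, of i] True by simp
    finally have "f i l \<le> nat (\<Sum>i'\<le>i. M i')" by linarith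
    also have "\<dots> \<le> B" unfolding B_def
      by (rule member_le_sum[where f="\<lambda>i. nat (\<Sum>i'\<le>i. M i')"]) (use True in auto)
    finally show ?thesis .
  next
    case False
    then show ?thesis using f unfolding flows_def by auto
  qed
  define F1 where "F1 = {g::nat\<Rightarrow>nat. \<forall>x. (x \<in> {..n} \<longrightarrow> g x \<in> {..B}) \<and> (x \<notin> {..n} \<longrightarrow> g x = 0)}"
  have "finite F1" unfolding F1_def by (rule finite_set_of_finite_funs) auto
  then have fin: "finite {f. \<forall>x. (x \<in> {..n} \<longrightarrow> f x \<in> F1) \<and> (x \<notin> {..n} \<longrightarrow> f x = (\<lambda>_. 0))}"
    by (intro finite_set_of_finite_funs) auto
  have "flows n M \<subseteq> {f. \<forall>x. (x \<in> {..n} \<longrightarrow> f x \<in> F1) \<and> (x \<notin> {..n} \<longrightarrow> f x = (\<lambda>_. 0))}"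
  proof
    fix f assume f: "f \<in> flows n M"
    then have z: "\<And>i j. \<not> (i < j \<and> j \<le> n) \<Longrightarrow> f i j = 0" unfolding flows_def by auto
    show "f \<in> {f. \<forall>x. (x \<in> {..n} \<longrightarrow> f x \<in> F1) \<and> (x \<notin> {..n} \<longrightarrow> f x = (\<lambda>_. 0))}"
      using z bnd[OF f] unfolding F1_def by auto
  qed
  then show ?thesis using fin finite_subset by blast
qed

lemma flow_exists:
  assumes nn: "\<forall>k<n. (\<Sum>i\<le>k. M i) \<ge> 0" and tot: "(\<Sum>i\<le>n. M i) = 0"
  shows "(\<lambda>i l. if l = Suc i \<and> l \<le> n then nat (\<Sum>i'\<le>i. M i') else 0) \<in> flows n M"
    (is "?f \<in> _")
proof -
  let ?S = "\<lambda>i. (\<Sum>i'\<le>i. M i')"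
  have out: "(\<Sum>l\<in>{i<..n}. int (?f i l)) = (if i < n then ?S i else 0)" for i
  proof -
    have "(\<Sum>l\<in>{i<..n}. int (?f i l)) = (\<Sum>l\<in>{i<..n}. if l = Suc i then int (nat (?S i)) else 0)"
      by (rule sum.cong) auto
    also have "\<dots> = (if i < n then ?S i else 0)" using nn by (simp add: sum.delta)
    finally show ?thesis .
  qed
  have inn: "(\<Sum>k<i. int (?f k i)) = (if 0 < i \<and> i \<le> n then ?S (i - 1) else 0)" for i
  proof (cases i)
    case 0 then show ?thesis by simp
  next
    case (Suc m)
    have "(\<Sum>k<i. int (?f k i)) = (\<Sum>k<i. if k = m then int (if i \<le> n then nat (?S m) else 0) else 0)"
      by (rule sum.cong) (auto simp: Suc)
    also have "\<dots> = (if 0 < i \<and> i \<le> n then ?S (i - 1) else 0)"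
      using nn Suc by (simp add: sum.delta)
    finally show ?thesis .
  qed
  have "(\<Sum>j\<in>{i<..n}. int (?f i j)) - (\<Sum>k<i. int (?f k i)) = M i" if "i \<le> n" for i
  proof (cases i)
    case 0
    then show ?thesis using out[of i] inn[of i] tot by (cases n) auto
  next
    case (Suc m)
    then show ?thesis using out[of i] inn[of i] tot that by (auto simp: not_less)
  qed
  then show ?thesis unfolding flows_def by auto
qed


lemma delta_sum: "(\<Sum>i<n. n - 1 - i) = n choose 2"
proof -
  have g: "(\<Sum>i<n. i) * 2 = n * (n - 1)" for n :: nat
  proof (induction n)
    case (Suc m)
    then show ?case by (cases m) (auto simp: algebra_simps)
  qed simp
  have "(\<Sum>i<n. n - 1 - i) = (\<Sum>i<n. n - Suc i)" by simp
  also have "\<dots> = (\<Sum>i<n. i)" by (rule sum.nat_diff_reindex)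
  also have "\<dots> = n choose 2" using g[of n] by (simp add: choose_two)
  finally show ?thesis .
qed

lemma jmd_partial:
  assumes "k < n"
  shows "(\<Sum>i\<le>k. j_minus_delta n j i) = int (\<Sum>i\<le>k. j i) - int (\<Sum>i\<le>k. n - 1 - i)"
proof -
  have "(\<Sum>i\<le>k. j_minus_delta n j i) = (\<Sum>i\<le>k. int (j i) - int (n - 1 - i))"
    by (rule sum.cong) (use assms in \<open>auto simp: j_minus_delta_def\<close>)
  then show ?thesis by (simp add: sum_subtractf)
qed

theorem proposition6p4:
  fixes n :: nat and N :: "nat \<Rightarrow> nat" and j :: "nat \<Rightarrow> nat"
  assumes "j \<in> weak_comps n"
  shows "j \<in> Splus n N \<longleftrightarrow>
    ((\<forall>i<n. j i \<le> N i + n - i - 1) \<and>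
     (\<forall>k<n. (\<Sum>i\<le>k. j i) \<ge> (\<Sum>i\<le>k. n - 1 - i)))"
proof -
  let ?M = "j_minus_delta n j"
  have wc: "(\<Sum>i<n. j i) = n choose 2" using assms unfolding weak_comps_def by auto
  have p: "(\<Prod>i<n. (N i + n - 1 - i) choose (j i)) > 0 \<longleftrightarrow> (\<forall>i<n. j i \<le> N i + n - i - 1)"
  proof -
    have "(\<Prod>i<n. (N i + n - 1 - i) choose (j i)) > 0 \<longleftrightarrow> (\<forall>i<n. j i \<le> N i + n - 1 - i)"
      by auto
    also have "\<dots> \<longleftrightarrow> (\<forall>i<n. j i \<le> N i + n - i - 1)"
      by (intro all_cong1 imp_cong) auto
    finally show ?thesis .
  qed
  have k: "kostant n ?M > 0 \<longleftrightarrow> (\<forall>k<n. (\<Sum>i\<le>k. j i) \<ge> (\<Sum>i\<le>k. n - 1 - i))"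
  proof
    assume "kostant n ?M > 0"
    then obtain f where f: "f \<in> flows n ?M" unfolding kostant_def by (metis card_gt_0_iff ex_in_conv)
    show "\<forall>k<n. (\<Sum>i\<le>k. j i) \<ge> (\<Sum>i\<le>k. n - 1 - i)"
    proof (intro allI impI)
      fix k assume kn: "k < n"
      have "0 \<le> (\<Sum>i\<le>k. \<Sum>l\<in>{k<..n}. int (f i l))" by (intro sum_nonneg) simp
      also have "\<dots> = (\<Sum>i\<le>k. ?M i)" using flow_cut[OF f, of k] kn by simp
      finally show "(\<Sum>i\<le>k. j i) \<ge> (\<Sum>i\<le>k. n - 1 - i)" using jmd_partial[OF kn, of j] by linarith
    qed
  next
    assume h: "\<forall>k<n. (\<Sum>i\<le>k. j i) \<ge> (\<Sum>i\<le>k. n - 1 - i)"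
    have nn: "\<forall>k<n. (\<Sum>i\<le>k. ?M i) \<ge> 0"
    proof (intro allI impI)
      fix k assume kn: "k < n"
      have "int (\<Sum>i\<le>k. n - 1 - i) \<le> int (\<Sum>i\<le>k. j i)" using h kn by (simp only: of_nat_le_iff)
      then show "(\<Sum>i\<le>k. ?M i) \<ge> 0" using jmd_partial[OF kn, of j] by linarith
    qed
    have "(\<Sum>i\<le>n. ?M i) = (\<Sum>i<n. ?M i)" by (simp add: lessThan_Suc_atMost[symmetric] j_minus_delta_def)
    also have "\<dots> = (\<Sum>i<n. int (j i) - int (n - 1 - i))"
      by (rule sum.cong) (auto simp: j_minus_delta_def)
    also have "\<dots> = int (\<Sum>i<n. j i) - int (\<Sum>i<n. n - 1 - i)" by (simp add: sum_subtractf)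
    also have "\<dots> = 0" using wc delta_sum by simp
    finally have tot: "(\<Sum>i\<le>n. ?M i) = 0" .
    have "flows n ?M \<noteq> {}" using flow_exists[OF nn tot] by blast
    then show "kostant n ?M > 0" unfolding kostant_def using flows_finite card_gt_0_iff by blast
  qed
  have "j \<in> Splus n N \<longleftrightarrow> (\<Prod>i<n. (N i + n - 1 - i) choose (j i)) * kostant n ?M > 0"
    using assms unfolding Splus_def by blast
  also have "\<dots> \<longleftrightarrow> (\<Prod>i<n. (N i + n - 1 - i) choose (j i)) > 0 \<and> kostant n ?M > 0"
    by (rule nat_0_less_mult_iff)
  finally show ?thesis using p k by blast
qed

end
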